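(* Let $G$ be a finite graph with $n\ge1$ vertices, each of degree at least $1$. Take $r=n+1$, $V=\mathbb{C}^{n+1}$, $B=I_{n+1}$, $x_j=e^{2\pi\sqrt{-1}\,j/n}$ for $j=1,\dots,n$, and $t=0$, and let $\mathcal{A}=\{A_1,A_2,\dots\}$ be given by $A_1^i=t$ if $i=n+1$ and $0$ otherwise, and for $d\ge2$: $A_d^{i_1\dots i_d}=x_i$ if $(i_1,\dots,i_d)$ is a permutation of $(i,i,n+1,\dots,n+1)$ with $i\in\{1,\dots,n\}$, $=t$ if $(i_1,\dots,i_d)=(n+1,\dots,n+1)$, and $0$ otherwise. Then the number of Hamiltonian cycles of $G$ equals $\frac1n\,\mathcal{F}_{\mathcal{A},I_{n+1}}(G)$.
   Context: $\mathcal{F}_{\mathcal{A},B}(G)=\sum_{c:H\to\{1,\dots,r\}}\prod_{\{h,h'\}\in E(G)}B_{c(h)c(h')}\prod_{k}A_{d_k}^{c(h_{k,1})\dots c(h_{k,d_k})}$, where $H$ is the set of half-edges of $G$ (two per edge, loops included) and $h_{k,1},\dots,h_{k,d_k}$ are the half-edges at vertex $v_k$ of degree $d_k$; i.e. a copy of $A_{d_k}$ is placed at each vertex and contracted along edges using $B$. A cycle of $G$ is a $2$-valent subgraph (every vertex in it has degree $2$ within it, loops counted twice); a Hamiltonian cycle is a connected cycle with $n=|V(G)|$ edges. *)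

theory Defs
  imports "HOL-Analysis.Analysis"
begin

text \<open>A finite multigraph (loops and parallel edges allowed) on the vertex set
  {0..<n} (vertex v_k is k-1): a finite set E of edge identifiers and a map
  ends giving the two endpoints of each edge.\<close>

definition multigraph :: "nat \<Rightarrow> 'e set \<Rightarrow> ('e \<Rightarrow> nat \<times> nat) \<Rightarrow> bool" where
  "multigraph n E ends \<longleftrightarrow> finite E \<and> (\<forall>e\<in>E. fst (ends e) < n \<and> snd (ends e) < n)"

definition half_edges :: "'e set \<Rightarrow> ('e \<times> bool) set" where
  "half_edges E = E \<times> (UNIV :: bool set)"

definition hvert :: "('e \<Rightarrow> nat \<times> nat) \<Rightarrow> 'e \<times> bool \<Rightarrow> nat" where
  "hvert ends h = (if snd h then snd (ends (fst h)) else fst (ends (fst h)))"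

definition halves_at :: "'e set \<Rightarrow> ('e \<Rightarrow> nat \<times> nat) \<Rightarrow> nat \<Rightarrow> ('e \<times> bool) set" where
  "halves_at E ends v = {h \<in> half_edges E. hvert ends h = v}"

text \<open>Degree of v within the edge set E (loops counted twice).\<close>
definition deg :: "'e set \<Rightarrow> ('e \<Rightarrow> nat \<times> nat) \<Rightarrow> nat \<Rightarrow> nat" where
  "deg E ends v = card (halves_at E ends v)"

definition halves_list :: "('e::linorder) set \<Rightarrow> ('e \<Rightarrow> nat \<times> nat) \<Rightarrow> nat \<Rightarrow> ('e \<times> bool) list" where
  "halves_list E ends v =
     concat (map (\<lambda>e. filter (\<lambda>h. hvert ends h = v) [(e, False), (e, True)])
                 (sorted_list_of_set E))"

text \<open>The partition function F_{A,B}(G).  The ordering h_{k,1},...,h_{k,d_k}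
  of the half-edges at a vertex is fixed as the sorted order.  Colours are 1..r.\<close>
definition partition_fn ::
  "nat \<Rightarrow> (nat \<Rightarrow> nat list \<Rightarrow> complex) \<Rightarrow> (nat \<Rightarrow> nat \<Rightarrow> complex) \<Rightarrow>
   nat \<Rightarrow> ('e::linorder) set \<Rightarrow> ('e \<Rightarrow> nat \<times> nat) \<Rightarrow> complex" where
  "partition_fn r A B n E ends =
     (\<Sum>c \<in> (half_edges E \<rightarrow>\<^sub>E {1..r}).
        (\<Prod>e\<in>E. B (c (e, False)) (c (e, True))) *
        (\<Prod>v\<in>{0..<n}. A (deg E ends v)
            (map c (halves_list E ends v))))"

definition edge_verts :: "'e set \<Rightarrow> ('e \<Rightarrow> nat \<times> nat) \<Rightarrow> nat set" where
  "edge_verts C ends = (\<Union>e\<in>C. {fst (ends e), snd (ends e)})"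

definition is_cycle :: "'e set \<Rightarrow> ('e \<Rightarrow> nat \<times> nat) \<Rightarrow> 'e set \<Rightarrow> bool" where
  "is_cycle E ends C \<longleftrightarrow> C \<subseteq> E \<and> (\<forall>v\<in>edge_verts C ends. deg C ends v = 2)"

definition adj_rel :: "'e set \<Rightarrow> ('e \<Rightarrow> nat \<times> nat) \<Rightarrow> (nat \<times> nat) set" where
  "adj_rel C ends = {(a, b). \<exists>e\<in>C. ends e = (a, b) \<or> ends e = (b, a)}"

definition edges_connected :: "'e set \<Rightarrow> ('e \<Rightarrow> nat \<times> nat) \<Rightarrow> bool" where
  "edges_connected C ends \<longleftrightarrow>
     (\<forall>u\<in>edge_verts C ends. \<forall>v\<in>edge_verts C ends. (u, v) \<in> (adj_rel C ends)\<^sup>*)"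

definition is_ham_cycle :: "nat \<Rightarrow> 'e set \<Rightarrow> ('e \<Rightarrow> nat \<times> nat) \<Rightarrow> 'e set \<Rightarrow> bool" where
  "is_ham_cycle n E ends C \<longleftrightarrow>
     is_cycle E ends C \<and> edges_connected C ends \<and> finite C \<and> card C = n"

definition A_fam :: "nat \<Rightarrow> (nat \<Rightarrow> complex) \<Rightarrow> complex \<Rightarrow> nat \<Rightarrow> nat list \<Rightarrow> complex" where
  "A_fam n x t d is =
     (if d = 1 then (if is = [n+1] then t else 0)
      else if d \<ge> 2 then
        (if (\<exists>i\<in>{1..n}. mset is = mset (i # i # replicate (d - 2) (n+1)))
         then x (THE i. i \<in> {1..n} \<and> mset is = mset (i # i # replicate (d - 2) (n+1)))
         else if is = replicate d (n+1) then t else 0)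
      else 0)"

definition Id_mat :: "nat \<Rightarrow> nat \<Rightarrow> complex" where
  "Id_mat i j = (if i = j then 1 else 0)"

end

theory Submission
  imports Defs
begin

lemma hl_aux_distinct:
  "distinct xs \<Longrightarrow> distinct (concat (map (\<lambda>e. filter (\<lambda>h. P h) [(e, False), (e, True)]) xs))"
  by (induction xs) auto

lemma hl_aux_one: "set (filter P [(a, False), (a, True)]) = {h. fst h = a \<and> P h}"
proof (rule set_eqI)
  fix h :: "'a \<times> bool"
  obtain e b where h: "h = (e, b)" by (cases h)
  show "h \<in> set (filter P [(a, False), (a, True)]) \<longleftrightarrow> h \<in> {h. fst h = a \<and> P h}"
    unfolding h by (cases b) auto
qed

lemma hl_aux_set:
  "set (concat (map (\<lambda>e. filter (\<lambda>h. P h) [(e, False), (e, True)]) xs)) = {h. fst h \<in> set xs \<and> P h}"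
proof (induction xs)
  case Nil then show ?case by simp
next
  case (Cons a xs)
  have "set (concat (map (\<lambda>e. filter (\<lambda>h. P h) [(e, False), (e, True)]) (a # xs)))
      = set (filter P [(a, False), (a, True)]) \<union> {h. fst h \<in> set xs \<and> P h}"
    using Cons by simp
  also have "\<dots> = {h. fst h \<in> set (a # xs) \<and> P h}" unfolding hl_aux_one by auto
  finally show ?case .
qed

lemma halves_list_distinct: "finite E \<Longrightarrow> distinct (halves_list E ends v)"
  unfolding halves_list_def by (rule hl_aux_distinct) simp

lemma halves_list_set: "finite E \<Longrightarrow> set (halves_list E ends v) = halves_at E ends v"
  unfolding halves_list_def halves_at_def half_edges_def
  by (subst hl_aux_set) auto

lemma halves_list_mset: "finite E \<Longrightarrow> mset (halves_list E ends v) = mset_set (halves_at E ends v)"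
  by (metis halves_list_distinct halves_list_set mset_set_set)

lemma finite_halves_at: "finite E \<Longrightarrow> finite (halves_at E ends v)"
  unfolding halves_at_def half_edges_def by auto

lemma length_halves_list: "finite E \<Longrightarrow> length (halves_list E ends v) = deg E ends v"
  unfolding deg_def by (metis distinct_card halves_list_distinct halves_list_set)

lemma mset_two_iff:
  assumes "finite P"
  shows "image_mset g (mset_set P) = {#i, i#} \<longleftrightarrow> card P = 2 \<and> (\<forall>h\<in>P. g h = i)"
proof
  assume a: "image_mset g (mset_set P) = {#i, i#}"
  have "card P = 2" using arg_cong[OF a, of size] assms by simp
  moreover have "\<forall>h\<in>P. g h = i"
  proof
    fix h assume "h \<in> P"
    then have "g h \<in># image_mset g (mset_set P)" using assms by simp
    then show "g h = i" using a by simp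
  qed
  ultimately show "card P = 2 \<and> (\<forall>h\<in>P. g h = i)" by blast
next
  assume a: "card P = 2 \<and> (\<forall>h\<in>P. g h = i)"
  then obtain x y where "P = {x, y}" "x \<noteq> y" by (meson card_2_iff)
  then show "image_mset g (mset_set P) = {#i, i#}" using a by auto
qed

lemma filter_repl_empty: "\<not> P a \<Longrightarrow> filter_mset P (replicate_mset k a) = {#}"
  by (induction k) auto

lemma mset_repl_iff:
  fixes M :: "nat multiset"
  assumes "set_mset M \<subseteq> {1..n+1}" "size M = d" "i \<in> {1..n}"
  shows "M = mset (i # i # replicate (d - 2) (n+1)) \<longleftrightarrow> filter_mset (\<lambda>c. c \<le> n) M = {#i, i#}"
proof
  assume "M = mset (i # i # replicate (d - 2) (n+1))"
  then show "filter_mset (\<lambda>c. c \<le> n) M = {#i, i#}" using assms(3) by (simp add: filter_repl_empty)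
next
  assume a: "filter_mset (\<lambda>c. c \<le> n) M = {#i, i#}"
  have M: "M = filter_mset (\<lambda>c. c \<le> n) M + filter_mset (\<lambda>c. \<not> c \<le> n) M"
    by (simp add: multiset_partition)
  have s: "size (filter_mset (\<lambda>c. \<not> c \<le> n) M) = d - 2"
    using arg_cong[OF M, of size] a assms(2) by simp
  have "set_mset (filter_mset (\<lambda>c. \<not> c \<le> n) M) \<subseteq> {n+1}" using assms(1) by auto
  then have "filter_mset (\<lambda>c. \<not> c \<le> n) M = replicate_mset (d - 2) (n+1)"
    using set_mset_subset_singletonD s by metis
  then show "M = mset (i # i # replicate (d - 2) (n+1))" using M a by simp
qed


definition Wc :: "(nat \<Rightarrow> complex) \<Rightarrow> ('e \<times> bool) set \<Rightarrow> ('e \<Rightarrow> nat) \<Rightarrow> complex" where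
  "Wc x P f = (if card P = 2 \<and> (\<forall>h\<in>P. \<forall>h'\<in>P. f (fst h) = f (fst h'))
               then x (f (fst (SOME h. h \<in> P))) else 0)"

lemma A_char:
  fixes E :: "('e::linorder) set"
  assumes fin: "finite E" and rng: "\<forall>e\<in>E. f e \<in> {1..n+1}" and d1: "deg E ends v \<ge> 1"
  shows "A_fam n x 0 (deg E ends v) (map (\<lambda>h. f (fst h)) (halves_list E ends v))
         = Wc x {h\<in>halves_at E ends v. f (fst h) \<le> n} f"
proof -
  define H where "H = halves_at E ends v"
  define P where "P = {h\<in>H. f (fst h) \<le> n}"
  define g where "g = (\<lambda>h::'e \<times> bool. f (fst h))"
  define d where "d = deg E ends v"
  define l where "l = map g (halves_list E ends v)"
  have finH: "finite H" unfolding H_def using fin by (rule finite_halves_at)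
  have finP: "finite P" unfolding P_def using finH by simp
  have HE: "\<And>h. h \<in> H \<Longrightarrow> fst h \<in> E" unfolding H_def halves_at_def half_edges_def by auto
  have M: "mset l = image_mset g (mset_set H)"
    unfolding l_def H_def using halves_list_mset[OF fin] by simp
  have sz: "size (mset l) = d" unfolding M d_def deg_def H_def by simp
  have st: "set_mset (mset l) \<subseteq> {1..n+1}"
    unfolding M using finH HE rng g_def by auto
  have flt: "filter_mset (\<lambda>c. c \<le> n) (mset l) = image_mset g (mset_set P)"
    unfolding M P_def using finH by (simp add: filter_mset_image_mset g_def)
  have key: "\<And>i. i \<in> {1..n} \<Longrightarrow>
      (mset l = mset (i # i # replicate (d - 2) (n+1))) \<longleftrightarrow> (card P = 2 \<and> (\<forall>h\<in>P. g h = i))"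
    using mset_repl_iff[OF st sz] flt mset_two_iff[OF finP] by simp
  define C where "C = (card P = 2 \<and> (\<forall>h\<in>P. \<forall>h'\<in>P. g h = g h'))"
  define h0 where "h0 = (SOME h. h \<in> P)"
  have cond: "(\<exists>i\<in>{1..n}. mset l = mset (i # i # replicate (d - 2) (n+1))) \<longleftrightarrow> C"
  proof
    assume "\<exists>i\<in>{1..n}. mset l = mset (i # i # replicate (d - 2) (n+1))"
    then obtain i where i: "i \<in> {1..n}" "mset l = mset (i # i # replicate (d - 2) (n+1))" by blast
    have "card P = 2 \<and> (\<forall>h\<in>P. g h = i)" using iffD1[OF key[OF i(1)] i(2)] .
    then show C unfolding C_def by simp
  next
    assume C
    then have "P \<noteq> {}" unfolding C_def by auto
    then have h0P: "h0 \<in> P" unfolding h0_def by (simp add: some_in_eq)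
    then have r: "g h0 \<in> {1..n}" unfolding P_def g_def using HE rng by auto
    have "card P = 2 \<and> (\<forall>h\<in>P. g h = g h0)" proof -
      have "card P = 2" using \<open>C\<close> unfolding C_def by blast
      moreover have "\<forall>h\<in>P. g h = g h0" using \<open>C\<close> h0P unfolding C_def by blast
      ultimately show ?thesis by blast
    qed
    then have "mset l = mset (g h0 # g h0 # replicate (d - 2) (n+1))" using iffD2[OF key[OF r]] by simp
    then show "\<exists>i\<in>{1..n}. mset l = mset (i # i # replicate (d - 2) (n+1))" using r by blast
  qed
  have the_eq: "C \<Longrightarrow> (THE i. i \<in> {1..n} \<and> mset l = mset (i # i # replicate (d - 2) (n+1))) = g h0"
  proof -
    assume C
    then have "P \<noteq> {}" unfolding C_def by auto
    then have h0P: "h0 \<in> P" unfolding h0_def by (simp add: some_in_eq)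
    then have r: "g h0 \<in> {1..n}" unfolding P_def g_def using HE rng by auto
    have c2: "card P = 2 \<and> (\<forall>h\<in>P. g h = g h0)" proof -
      have "card P = 2" using \<open>C\<close> unfolding C_def by blast
      moreover have "\<forall>h\<in>P. g h = g h0" using \<open>C\<close> h0P unfolding C_def by blast
      ultimately show ?thesis by blast
    qed
    show ?thesis
    proof (rule the_equality)
      show "g h0 \<in> {1..n} \<and> mset l = mset (g h0 # g h0 # replicate (d - 2) (n+1))"
        using r iffD2[OF key[OF r] c2] by simp
    next
      fix i assume a: "i \<in> {1..n} \<and> mset l = mset (i # i # replicate (d - 2) (n+1))"
      have "card P = 2 \<and> (\<forall>h\<in>P. g h = i)" using iffD1[OF key[OF conjunct1[OF a]] conjunct2[OF a]] .
      then have "\<forall>h\<in>P. g h = i" by blast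
      then show "i = g h0" using h0P by auto
    qed
  qed
  have W: "Wc x P f = (if C then x (g h0) else 0)"
    unfolding Wc_def C_def g_def h0_def by simp
  have main: "A_fam n x 0 d l = Wc x P f"
  proof (cases "d = 1")
    case True
    have "card P \<le> card H" unfolding P_def using finH by (intro card_mono) auto
    then have nC: "\<not> C" using True unfolding C_def d_def deg_def H_def by auto
    have "A_fam n x 0 d l = 0" using True unfolding A_fam_def by simp
    then show ?thesis using W nC by simp
  next
    case False
    then have d2: "d \<ge> 2" using d1 d_def by simp
    have A: "A_fam n x 0 d l = (if \<exists>i\<in>{1..n}. mset l = mset (i # i # replicate (d - 2) (n+1))
        then x (THE i. i \<in> {1..n} \<and> mset l = mset (i # i # replicate (d - 2) (n+1)))
        else if l = replicate d (n+1) then 0 else 0)"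
      unfolding A_fam_def using False d2 by (simp only: if_False if_True not_False_eq_True simp_thms)
    show ?thesis
    proof (cases C)
      case True
      then show ?thesis using A W cond the_eq by simp
    next
      case False
      then show ?thesis using A W cond by simp
    qed
  qed
  then show ?thesis unfolding d_def l_def g_def P_def H_def .
qed


lemma pf_reduce:
  fixes E :: "('e::linorder) set"
  assumes fin: "finite E"
  shows "partition_fn r A Id_mat n E ends =
    (\<Sum>f\<in>E \<rightarrow>\<^sub>E {1..r}. \<Prod>v\<in>{0..<n}. A (deg E ends v) (map (\<lambda>h. f (fst h)) (halves_list E ends v)))"
proof -
  define H where "H = half_edges E"
  define \<phi> where "\<phi> f = (\<lambda>h. if h \<in> H then f (fst h) else undefined)" for f :: "'e \<Rightarrow> nat"
  define T where "T c = (\<Prod>e\<in>E. Id_mat (c (e, False)) (c (e, True))) *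
        (\<Prod>v\<in>{0..<n}. A (deg E ends v) (map c (halves_list E ends v)))" for c
  have finH: "finite H" unfolding H_def half_edges_def using fin by simp
  have inH: "\<And>e b. e \<in> E \<Longrightarrow> (e, b) \<in> H" unfolding H_def half_edges_def by simp
  have sub: "\<phi> ` (E \<rightarrow>\<^sub>E {1..r}) \<subseteq> H \<rightarrow>\<^sub>E {1..r}"
    unfolding \<phi>_def H_def half_edges_def by (auto simp: PiE_def Pi_def extensional_def)
  have zero: "\<forall>c \<in> (H \<rightarrow>\<^sub>E {1..r}) - \<phi> ` (E \<rightarrow>\<^sub>E {1..r}). T c = 0"
  proof
    fix c assume c: "c \<in> (H \<rightarrow>\<^sub>E {1..r}) - \<phi> ` (E \<rightarrow>\<^sub>E {1..r})"
    have "\<exists>e\<in>E. c (e, False) \<noteq> c (e, True)"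
    proof (rule ccontr)
      assume "\<not> ?thesis"
      then have eq: "\<forall>e\<in>E. c (e, False) = c (e, True)" by simp
      define f where "f = (\<lambda>e. if e \<in> E then c (e, False) else undefined)"
      have "f \<in> E \<rightarrow>\<^sub>E {1..r}" using c inH unfolding f_def by (auto simp: PiE_def Pi_def extensional_def)
      moreover have "\<phi> f = c"
      proof
        fix h
        show "\<phi> f h = c h"
        proof (cases "h \<in> H")
          case True
          then obtain e b where h: "h = (e, b)" "e \<in> E" unfolding H_def half_edges_def by auto
          then show ?thesis using eq unfolding \<phi>_def f_def using True by (cases b) auto
        next
          case False
          have "c h = undefined" using c False by (intro PiE_arb) auto
          then show ?thesis using False unfolding \<phi>_def by simp
        qed
      qed
      ultimately show False using c by blast
    qed
    then obtain e where "e \<in> E" "c (e, False) \<noteq> c (e, True)" by blast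
    then have "(\<Prod>e\<in>E. Id_mat (c (e, False)) (c (e, True))) = 0"
      using fin by (subst prod_zero_iff) (auto simp: Id_mat_def)
    then show "T c = 0" unfolding T_def by simp
  qed
  have inj: "inj_on \<phi> (E \<rightarrow>\<^sub>E {1..r})"
  proof
    fix f g assume f: "f \<in> E \<rightarrow>\<^sub>E {1..r}" and g: "g \<in> E \<rightarrow>\<^sub>E {1..r}" and fg: "\<phi> f = \<phi> g"
    show "f = g"
    proof
      fix e show "f e = g e"
      proof (cases "e \<in> E")
        case True
        then show ?thesis using fun_cong[OF fg, of "(e, False)"] inH unfolding \<phi>_def by simp
      next
        case False
        then show ?thesis using f g by (simp add: PiE_def extensional_def)
      qed
    qed
  qed
  have Tphi: "T (\<phi> f) = (\<Prod>v\<in>{0..<n}. A (deg E ends v) (map (\<lambda>h. f (fst h)) (halves_list E ends v)))" for f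
  proof -
    have i1: "(\<Prod>e\<in>E. Id_mat (\<phi> f (e, False)) (\<phi> f (e, True))) = 1"
      by (rule prod.neutral) (simp add: \<phi>_def inH Id_mat_def)
    have m: "map (\<phi> f) (halves_list E ends v) = map (\<lambda>h. f (fst h)) (halves_list E ends v)" for v
      using halves_list_set[OF fin] unfolding \<phi>_def H_def halves_at_def by (intro map_cong) auto
    show ?thesis unfolding T_def i1 m by simp
  qed
  have "partition_fn r A Id_mat n E ends = sum T (H \<rightarrow>\<^sub>E {1..r})"
    unfolding partition_fn_def T_def H_def by simp
  also have "\<dots> = sum T (\<phi> ` (E \<rightarrow>\<^sub>E {1..r}))"
    using sub zero finH by (intro sum.mono_neutral_right) (auto simp: finite_PiE)
  also have "\<dots> = sum (T \<circ> \<phi>) (E \<rightarrow>\<^sub>E {1..r})" using inj by (rule sum.reindex)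
  finally show ?thesis using Tphi by simp
qed

definition FF :: "nat \<Rightarrow> 'e set \<Rightarrow> 'e set \<Rightarrow> ('e \<Rightarrow> nat) set" where
  "FF n E S = {f \<in> E \<rightarrow>\<^sub>E {1..n+1}. {e\<in>E. f e \<le> n} = S}"

definition Wt :: "nat \<Rightarrow> (nat \<Rightarrow> complex) \<Rightarrow> 'e set \<Rightarrow> ('e \<Rightarrow> nat \<times> nat) \<Rightarrow> ('e \<Rightarrow> nat) \<Rightarrow> complex" where
  "Wt n x E ends f = (\<Prod>v\<in>{0..<n}. Wc x {h\<in>halves_at E ends v. f (fst h) \<le> n} f)"

lemma Pv_eq: "f \<in> FF n E S \<Longrightarrow> {h\<in>halves_at E ends v. f (fst h) \<le> n} = halves_at S ends v"
  unfolding FF_def halves_at_def half_edges_def by auto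

lemma pf_Wt:
  fixes E :: "('e::linorder) set"
  assumes fin: "finite E" and d1: "\<forall>v<n. deg E ends v \<ge> 1"
  shows "partition_fn (n+1) (A_fam n x 0) Id_mat n E ends =
         (\<Sum>S\<in>Pow E. \<Sum>f\<in>FF n E S. Wt n x E ends f)"
proof -
  have "partition_fn (n+1) (A_fam n x 0) Id_mat n E ends = (\<Sum>f\<in>E \<rightarrow>\<^sub>E {1..n+1}. Wt n x E ends f)"
    unfolding pf_reduce[OF fin] Wt_def
  proof (intro sum.cong refl prod.cong)
    fix f v assume f: "f \<in> E \<rightarrow>\<^sub>E {1..n+1}" and v: "v \<in> {0..<n}"
    show "A_fam n x 0 (deg E ends v) (map (\<lambda>h. f (fst h)) (halves_list E ends v)) =
          Wc x {h \<in> halves_at E ends v. f (fst h) \<le> n} f"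
      using f v d1 fin by (intro A_char) auto
  qed
  also have "\<dots> = (\<Sum>S\<in>Pow E. \<Sum>f\<in>{f \<in> E \<rightarrow>\<^sub>E {1..n+1}. {e\<in>E. f e \<le> n} = S}. Wt n x E ends f)"
    using fin by (intro sum.group[symmetric]) (auto simp: finite_PiE)
  finally show ?thesis unfolding FF_def .
qed

lemma handshake:
  assumes "finite C" "finite T" "hvert ends ` half_edges C \<subseteq> T"
  shows "(\<Sum>v\<in>T. deg C ends v) = 2 * card C"
proof -
  have fh: "finite (half_edges C)" using assms(1) unfolding half_edges_def by simp
  have "card (half_edges C) = 2 * card C" unfolding half_edges_def
    by (simp add: card_cartesian_product)
  moreover have "(\<Sum>v\<in>T. \<Sum>h\<in>{h\<in>half_edges C. hvert ends h = v}. (1::nat)) = (\<Sum>h\<in>half_edges C. 1)"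
    using fh assms by (intro sum.group) auto
  ultimately show ?thesis unfolding deg_def halves_at_def by simp
qed


definition xw :: "nat \<Rightarrow> nat \<Rightarrow> complex" where
  "xw n j = exp (2 * pi * \<i> * of_nat j / of_nat n)"

lemma xw_pow_n: "n \<ge> 1 \<Longrightarrow> xw n j ^ n = 1"
proof -
  assume n: "n \<ge> 1"
  have "xw n j ^ n = exp (of_nat n * (2 * pi * \<i> * of_nat j / of_nat n))"
    unfolding xw_def by (simp only: exp_of_nat_mult)
  also have "\<dots> = exp (2 * pi * \<i> * of_nat j)" using n by simp
  also have "\<dots> = 1" by (simp add: exp_eq_1) (metis of_int_of_nat_eq)
  finally show ?thesis .
qed

lemma xw_shift: "n \<ge> 1 \<Longrightarrow> j \<in> {1..n} \<Longrightarrow> xw n (j mod n + 1) = xw n 1 * xw n j"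
proof -
  assume n: "n \<ge> 1" and j: "j \<in> {1..n}"
  show ?thesis
  proof (cases "j = n")
    case True
    have "xw n n = 1" unfolding xw_def using n by (simp add: exp_eq_1)
    then show ?thesis using True by simp
  next
    case False
    then have "j mod n = j" using j by simp
    moreover have "xw n (j + 1) = xw n 1 * xw n j" unfolding xw_def
      by (simp add: exp_add[symmetric] add_divide_distrib distrib_left algebra_simps)
    ultimately show ?thesis by simp
  qed
qed

lemma xw_pow_ne1: "0 < k \<Longrightarrow> k < n \<Longrightarrow> xw n 1 ^ k \<noteq> 1"
proof
  assume k: "0 < k" "k < n" and eq: "xw n 1 ^ k = 1"
  have "xw n 1 ^ k = exp (complex_of_real (2 * pi * real k / real n) * \<i>)"
    unfolding xw_def by (simp add: exp_of_nat_mult[symmetric] algebra_simps)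
  then obtain m :: int where m: "2 * pi * real k / real n = of_int (2 * m) * pi"
    using eq by (auto simp: exp_eq_1)
  then have "(2*pi) * (real k / real n) = (2*pi) * of_int m" by (simp add: algebra_simps)
  then have "real k / real n = of_int m"
    by (metis mult_cancel_left pi_neq_zero zero_neq_numeral mult_eq_0_iff)
  moreover have "0 < real k / real n" "real k / real n < 1" using k by auto
  ultimately show False by (metis of_int_0_less_iff of_int_less_1_iff not_less zero_less_one less_le_trans
      int_one_le_iff_zero_less le_less)
qed

lemma mod_inj: "a \<in> {1..n} \<Longrightarrow> b \<in> {1..(n::nat)} \<Longrightarrow> a mod n + 1 = b mod n + 1 \<Longrightarrow> a = b"
  by (metis atLeastAtMost_iff add_right_cancel le_neq_implies_less mod_less mod_self not_one_le_zero
      le_zero_eq mod_0)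


lemma Wc_same:
  assumes "\<forall>h\<in>P. g (fst h) = f (fst h)"
  shows "Wc x P g = Wc x P f"
proof (cases "P = {}")
  case True then show ?thesis unfolding Wc_def by simp
next
  case False
  then have "(SOME h. h \<in> P) \<in> P" by (simp add: some_in_eq)
  then have e2: "g (fst (SOME h. h \<in> P)) = f (fst (SOME h. h \<in> P))" using assms by blast
  have e1: "(\<forall>h\<in>P. \<forall>h'\<in>P. g (fst h) = g (fst h')) = (\<forall>h\<in>P. \<forall>h'\<in>P. f (fst h) = f (fst h'))"
    using assms by simp
  show ?thesis unfolding Wc_def e1 e2 ..
qed

lemma Wc_nz:
  assumes "Wc x P f \<noteq> 0"
  shows "card P = 2 \<and> (\<forall>h\<in>P. \<forall>h'\<in>P. f (fst h) = f (fst h'))"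
proof (rule ccontr)
  assume a: "\<not> (card P = 2 \<and> (\<forall>h\<in>P. \<forall>h'\<in>P. f (fst h) = f (fst h')))"
  have "Wc x P f = 0" unfolding Wc_def using a by (rule if_not_P)
  then show False using assms by simp
qed

lemma if_mult_zero: "(if b then (a::complex) * y else 0) = a * (if b then y else 0)"
  by simp

lemma Wc_shift:
  assumes g: "\<forall>h\<in>P. g (fst h) = f (fst h) mod n + 1" and f: "\<forall>h\<in>P. f (fst h) \<in> {1..n}" and n: "n \<ge> 1"
  shows "Wc (xw n) P g = xw n 1 * Wc (xw n) P f"
proof -
  have c: "(\<forall>h\<in>P. \<forall>h'\<in>P. g (fst h) = g (fst h')) \<longleftrightarrow> (\<forall>h\<in>P. \<forall>h'\<in>P. f (fst h) = f (fst h'))"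
  proof -
    have "\<forall>h\<in>P. \<forall>h'\<in>P. (g (fst h) = g (fst h')) = (f (fst h) = f (fst h'))"
    proof (intro ballI)
      fix h h' assume "h \<in> P" "h' \<in> P"
      then show "(g (fst h) = g (fst h')) = (f (fst h) = f (fst h'))"
        using g f mod_inj[of "f (fst h)" n "f (fst h')"] by auto
    qed
    then show ?thesis by blast
  qed
  show ?thesis
  proof (cases "P = {}")
    case True then show ?thesis unfolding Wc_def by simp
  next
    case False
    then have h0: "(SOME h. h \<in> P) \<in> P" by (simp add: some_in_eq)
    have g0: "g (fst (SOME h. h \<in> P)) = f (fst (SOME h. h \<in> P)) mod n + 1" using g h0 by blast
    have f0: "f (fst (SOME h. h \<in> P)) \<in> {1..n}" using f h0 by blast
    have x0: "xw n (g (fst (SOME h. h \<in> P))) = xw n 1 * xw n (f (fst (SOME h. h \<in> P)))"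
      unfolding g0 using xw_shift[OF n f0] .
    show ?thesis unfolding Wc_def c x0 by (rule if_mult_zero)
  qed
qed

context
  fixes n :: nat and E :: "('e::linorder) set" and ends :: "'e \<Rightarrow> nat \<times> nat" and S :: "'e set"
  assumes n1: "n \<ge> 1" and mg: "multigraph n E ends" and SE: "S \<subseteq> E"
begin

lemma finE: "finite E" using mg unfolding multigraph_def by simp

lemma ends_lt: "e \<in> E \<Longrightarrow> fst (ends e) < n \<and> snd (ends e) < n"
  using mg unfolding multigraph_def by simp

lemma finFF: "finite (FF n E S)"
  unfolding FF_def using finE by (intro finite_subset[OF _ finite_PiE[of E "\<lambda>_. {1..n+1}"]]) auto

lemma half_in: "h \<in> halves_at S ends v \<Longrightarrow> fst h \<in> S \<and> (v = fst (ends (fst h)) \<or> v = snd (ends (fst h)))"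
  unfolding halves_at_def half_edges_def hvert_def by (auto split: if_splits)

lemma half_F: "e \<in> S \<Longrightarrow> (e, False) \<in> halves_at S ends (fst (ends e))"
  unfolding halves_at_def half_edges_def hvert_def by auto

lemma half_T: "e \<in> S \<Longrightarrow> (e, True) \<in> halves_at S ends (snd (ends e))"
  unfolding halves_at_def half_edges_def hvert_def by auto

lemma ev_lt: "v \<in> edge_verts S ends \<Longrightarrow> v < n"
  unfolding edge_verts_def using ends_lt SE by auto

lemma Wt_FF: "f \<in> FF n E S \<Longrightarrow> Wt n x E ends f = (\<Prod>v\<in>{0..<n}. Wc x (halves_at S ends v) f)"
  unfolding Wt_def by (simp add: Pv_eq)

lemma FF_vals: "f \<in> FF n E S \<Longrightarrow> e \<in> E \<Longrightarrow> f e \<in> {1..n+1} \<and> (f e \<le> n \<longleftrightarrow> e \<in> S)"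
  unfolding FF_def by auto

lemma caseA:
  assumes "\<exists>v<n. deg S ends v \<noteq> 2"
  shows "sum (Wt n x E ends) (FF n E S) = 0"
proof (rule sum.neutral, rule ballI)
  fix f assume f: "f \<in> FF n E S"
  obtain v where v: "v < n" "deg S ends v \<noteq> 2" using assms by blast
  have "Wc x (halves_at S ends v) f = 0" using v unfolding Wc_def deg_def by simp
  then show "Wt n x E ends f = 0" unfolding Wt_FF[OF f] using v by (subst prod_zero_iff) auto
qed

lemma adj_sym: "(a, b) \<in> adj_rel S ends \<Longrightarrow> (b, a) \<in> adj_rel S ends"
  unfolding adj_rel_def by auto

lemma adj_I: "e \<in> S \<Longrightarrow> (fst (ends e), snd (ends e)) \<in> adj_rel S ends"
  unfolding adj_rel_def by auto

lemma in_ev: "e \<in> S \<Longrightarrow> fst (ends e) \<in> edge_verts S ends"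
  unfolding edge_verts_def by auto

lemma zero_ev:
  assumes deg2: "\<forall>v<n. deg S ends v = 2"
  obtains e0 where "e0 \<in> S" "0 \<in> edge_verts S ends"
proof -
  have "halves_at S ends 0 \<noteq> {}" using deg2 n1 unfolding deg_def by fastforce
  then obtain h where "h \<in> halves_at S ends 0" by blast
  then have "fst h \<in> S" "0 = fst (ends (fst h)) \<or> 0 = snd (ends (fst h))" using half_in by blast+
  then show ?thesis using that unfolding edge_verts_def by blast
qed

lemma caseB:
  assumes deg2: "\<forall>v<n. deg S ends v = 2" and conn: "edges_connected S ends"
  shows "sum (Wt n (xw n) E ends) (FF n E S) = of_nat n"
proof -
  define cf where "cf i = (\<lambda>e. if e \<in> E then (if e \<in> S then i else n+1) else undefined)" for i
  obtain e0 where e0: "e0 \<in> S" "0 \<in> edge_verts S ends" using zero_ev[OF deg2] by blast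
  have cfFF: "cf i \<in> FF n E S" if "i \<in> {1..n}" for i
    using that SE unfolding FF_def cf_def by (auto simp: PiE_def Pi_def extensional_def)
  have inj: "inj_on cf {1..n}"
  proof
    fix i j assume "cf i = cf j"
    then show "i = j" using fun_cong[of "cf i" "cf j" e0] e0 SE unfolding cf_def by auto
  qed
  have Wcf: "Wt n (xw n) E ends (cf i) = 1" if i: "i \<in> {1..n}" for i
  proof -
    have "Wc (xw n) (halves_at S ends v) (cf i) = xw n i" if v: "v \<in> {0..<n}" for v
    proof -
      have c2: "card (halves_at S ends v) = 2" using deg2 v unfolding deg_def by simp
      then have "halves_at S ends v \<noteq> {}" by auto
      then have s: "(SOME h. h \<in> halves_at S ends v) \<in> halves_at S ends v" by (simp add: some_in_eq)
      have vals: "\<forall>h\<in>halves_at S ends v. cf i (fst h) = i" using half_in SE unfolding cf_def by auto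
      show ?thesis unfolding Wc_def using c2 s vals by simp
    qed
    then have "Wt n (xw n) E ends (cf i) = (\<Prod>v\<in>{0..<n}. xw n i)"
      unfolding Wt_FF[OF cfFF[OF i]] by (intro prod.cong) auto
    also have "\<dots> = 1" using xw_pow_n[OF n1] by simp
    finally show ?thesis .
  qed
  have zero: "Wt n (xw n) E ends f = 0" if f: "f \<in> FF n E S - cf ` {1..n}" for f
  proof (rule ccontr)
    assume nz: "Wt n (xw n) E ends f \<noteq> 0"
    have fF: "f \<in> FF n E S" using f by simp
    have cond: "\<forall>h\<in>halves_at S ends v. \<forall>h'\<in>halves_at S ends v. f (fst h) = f (fst h')" if v: "v < n" for v
    proof -
      have "\<not> (\<exists>v\<in>{0..<n}. Wc (xw n) (halves_at S ends v) f = 0)"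
        using nz unfolding Wt_FF[OF fF] prod_zero_iff[OF finite_atLeastLessThan] .
      then have "Wc (xw n) (halves_at S ends v) f \<noteq> 0" using v by simp
      then show ?thesis using Wc_nz by blast
    qed
    define col where "col v = f (fst (SOME h. h \<in> halves_at S ends v))" for v
    have hc: "f (fst h) = col v" if "v < n" "h \<in> halves_at S ends v" for v h
    proof -
      have "(SOME h. h \<in> halves_at S ends v) \<in> halves_at S ends v" using that(2) by (rule someI)
      then show ?thesis using cond that unfolding col_def by blast
    qed
    have edge: "f e = col (fst (ends e)) \<and> f e = col (snd (ends e))" if "e \<in> S" for e
      using hc[OF _ half_F[OF that]] hc[OF _ half_T[OF that]] ends_lt that SE by auto
    have adj: "col a = col b" if ab: "(a, b) \<in> adj_rel S ends" for a b
    proof -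
      obtain e where e: "e \<in> S" "ends e = (a, b) \<or> ends e = (b, a)" using ab unfolding adj_rel_def by blast
      then show ?thesis using edge[OF e(1)] by auto
    qed
    have rt: "col a = col b" if "(a, b) \<in> (adj_rel S ends)\<^sup>*" for a b
      using that by (induction rule: rtrancl_induct) (auto dest: adj)
    have all: "f e = col 0" if "e \<in> S" for e
    proof -
      have "(0, fst (ends e)) \<in> (adj_rel S ends)\<^sup>*" using conn e0(2) in_ev[OF that] unfolding edges_connected_def by blast
      then have "col 0 = col (fst (ends e))" by (rule rt)
      then show ?thesis using edge[OF that] by simp
    qed
    have c0: "col 0 \<in> {1..n}" using all[OF e0(1)] FF_vals[OF fF, of e0] e0 SE by auto
    have "f = cf (col 0)"
    proof
      fix e show "f e = cf (col 0) e"
      proof (cases "e \<in> E")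
        case True
        then show ?thesis using all FF_vals[OF fF True] unfolding cf_def by auto
      next
        case False
        then show ?thesis using fF unfolding FF_def cf_def by (auto intro: PiE_arb)
      qed
    qed
    then show False using f c0 by blast
  qed
  have "sum (Wt n (xw n) E ends) (FF n E S) = sum (Wt n (xw n) E ends) (cf ` {1..n})"
    using cfFF finFF zero by (intro sum.mono_neutral_right) auto
  also have "\<dots> = sum (Wt n (xw n) E ends \<circ> cf) {1..n}" using inj by (rule sum.reindex)
  also have "\<dots> = sum (\<lambda>_. 1) {1..n}" using Wcf by (intro sum.cong) auto
  finally show ?thesis by simp
qed

lemma caseC:
  assumes deg2: "\<forall>v<n. deg S ends v = 2" and nconn: "\<not> edges_connected S ends"
  shows "sum (Wt n (xw n) E ends) (FF n E S) = 0"
proof -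
  define U where "U = {u. (0, u) \<in> (adj_rel S ends)\<^sup>*}"
  have bk: "(u, 0) \<in> (adj_rel S ends)\<^sup>*" if "(0, u) \<in> (adj_rel S ends)\<^sup>*" for u
    using that
  proof (induction rule: rtrancl_induct)
    case base then show ?case by simp
  next
    case (step y z)
    show ?case by (rule converse_rtrancl_into_rtrancl[OF adj_sym[OF step.hyps(2)] step.IH])
  qed
  obtain w where w: "w < n" "w \<notin> U"
  proof (rule ccontr)
    assume "\<not> thesis"
    then have allU: "\<forall>w<n. w \<in> U" using that by blast
    have "edges_connected S ends" unfolding edges_connected_def
    proof (intro ballI)
      fix u v assume "u \<in> edge_verts S ends" "v \<in> edge_verts S ends"
      then have 1: "(0, u) \<in> (adj_rel S ends)\<^sup>*" and 2: "(0, v) \<in> (adj_rel S ends)\<^sup>*"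
        using allU ev_lt unfolding U_def by auto
      show "(u, v) \<in> (adj_rel S ends)\<^sup>*" by (rule rtrancl_trans[OF bk[OF 1] 2])
    qed
    then show False using nconn by simp
  qed
  define k where "k = card ({0..<n} \<inter> {v. v \<in> U})"
  have k0: "0 < k"
  proof -
    have "0 \<in> {0..<n} \<inter> {v. v \<in> U}" using n1 unfolding U_def by simp
    moreover have "finite ({0..<n} \<inter> {v. v \<in> U})" by simp
    ultimately show ?thesis unfolding k_def using card_gt_0_iff by blast
  qed
  have kn: "k < n"
  proof -
    have "w \<in> {0..<n}" "w \<notin> {0..<n} \<inter> {v. v \<in> U}" using w by simp_all
    then have "{0..<n} \<inter> {v. v \<in> U} \<noteq> {0..<n}" by blast
    then have "{0..<n} \<inter> {v. v \<in> U} \<subset> {0..<n}" by blast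
    from psubset_card_mono[OF finite_atLeastLessThan this] show ?thesis unfolding k_def by simp
  qed
  define R where "R f = (\<lambda>e. if e \<in> E then (if e \<in> S \<and> fst (ends e) \<in> U then f e mod n + 1 else f e) else undefined)"
    for f :: "'e \<Rightarrow> nat"
  have RFF: "R f \<in> FF n E S" if f: "f \<in> FF n E S" for f
  proof -
    have "R f \<in> E \<rightarrow>\<^sub>E {1..n+1}"
    proof (rule PiE_I)
      fix e assume e: "e \<in> E"
      show "R f e \<in> {1..n+1}"
      proof (cases "e \<in> S \<and> fst (ends e) \<in> U")
        case True
        have "f e mod n < n" using n1 by simp
        then show ?thesis using True e unfolding R_def by simp
      next
        case False
        have "R f e = f e" using False e unfolding R_def by auto
        then show ?thesis using conjunct1[OF FF_vals[OF f e]] by simp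
      qed
    next
      fix e assume "e \<notin> E" then show "R f e = undefined" unfolding R_def by simp
    qed
    moreover have "{e\<in>E. R f e \<le> n} = S"
    proof -
      have "R f e \<le> n \<longleftrightarrow> e \<in> S" if e: "e \<in> E" for e
      proof (cases "e \<in> S \<and> fst (ends e) \<in> U")
        case True
        have "f e mod n < n" using n1 by simp
        then show ?thesis using True e unfolding R_def by simp
      next
        case False
        have "R f e = f e" using False e unfolding R_def by auto
        then show ?thesis using conjunct2[OF FF_vals[OF f e]] by simp
      qed
      then show ?thesis using SE by auto
    qed
    ultimately show ?thesis unfolding FF_def by simp
  qed
  have injR: "inj_on R (FF n E S)"
  proof
    fix f g assume f: "f \<in> FF n E S" and g: "g \<in> FF n E S" and fg: "R f = R g"
    show "f = g"
    proof
      fix e show "f e = g e"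
      proof (cases "e \<in> E")
        case True
        note ff = FF_vals[OF f True] and gg = FF_vals[OF g True]
        show ?thesis
        proof (cases "e \<in> S \<and> fst (ends e) \<in> U")
          case True2: True
          then have "f e mod n + 1 = g e mod n + 1" using fun_cong[OF fg, of e] True unfolding R_def by simp
          moreover have "f e \<in> {1..n}" using ff True2 by auto
          moreover have "g e \<in> {1..n}" using gg True2 by auto
          ultimately show ?thesis using mod_inj by blast
        next
          case False
          have "R f e = f e" "R g e = g e" using True False unfolding R_def by auto
          then show ?thesis using fg by simp
        qed
      next
        case False
        have fP: "f \<in> E \<rightarrow>\<^sub>E {1..n+1}" and gP: "g \<in> E \<rightarrow>\<^sub>E {1..n+1}" using f g unfolding FF_def by auto
        show ?thesis using PiE_arb[OF fP False] PiE_arb[OF gP False] by simp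
      qed
    qed
  qed
  have Rsurj: "R ` FF n E S = FF n E S" 
  proof (rule endo_inj_surj[OF finFF _ injR])
    show "R ` FF n E S \<subseteq> FF n E S" using RFF by blast
  qed
  have inU: "fst (ends (fst h)) \<in> U" if "v \<in> U" "h \<in> halves_at S ends v" for v h
  proof -
    have e: "fst h \<in> S" "v = fst (ends (fst h)) \<or> v = snd (ends (fst h))" using half_in that(2) by blast+
    show ?thesis
    proof (cases "v = fst (ends (fst h))")
      case True then show ?thesis using that by simp
    next
      case False
      then have "v = snd (ends (fst h))" using e(2) by blast
      then have "(fst (ends (fst h)), v) \<in> adj_rel S ends" using adj_I[OF e(1)] by simp
      then have "(v, fst (ends (fst h))) \<in> adj_rel S ends" by (rule adj_sym)
      then show ?thesis using that(1) unfolding U_def by (simp add: rtrancl_into_rtrancl)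
    qed
  qed
  have notU: "fst (ends (fst h)) \<notin> U" if "v \<notin> U" "h \<in> halves_at S ends v" for v h
  proof
    assume a: "fst (ends (fst h)) \<in> U"
    have e: "fst h \<in> S" "v = fst (ends (fst h)) \<or> v = snd (ends (fst h))" using half_in that(2) by blast+
    show False
    proof (cases "v = fst (ends (fst h))")
      case True then show ?thesis using that a by simp
    next
      case False
      then have "v = snd (ends (fst h))" using e(2) by blast
      then have "(fst (ends (fst h)), v) \<in> adj_rel S ends" using adj_I[OF e(1)] by simp
      then show ?thesis using that(1) a unfolding U_def by (simp add: rtrancl_into_rtrancl)
    qed
  qed
  have WR: "Wt n (xw n) E ends (R f) = xw n 1 ^ k * Wt n (xw n) E ends f" if f: "f \<in> FF n E S" for f
  proof -
    have fac: "Wc (xw n) (halves_at S ends v) (R f) = (if v \<in> U then xw n 1 else 1) * Wc (xw n) (halves_at S ends v) f"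
      for v
    proof (cases "v \<in> U")
      case True
      have "\<forall>h\<in>halves_at S ends v. R f (fst h) = f (fst h) mod n + 1"
      proof
        fix h assume h: "h \<in> halves_at S ends v"
        have "fst h \<in> S" using half_in[OF h] by blast
        moreover have "fst (ends (fst h)) \<in> U" using inU[OF True h] .
        ultimately show "R f (fst h) = f (fst h) mod n + 1" using SE unfolding R_def by auto
      qed
      moreover have "\<forall>h\<in>halves_at S ends v. f (fst h) \<in> {1..n}"
      proof
        fix h assume h: "h \<in> halves_at S ends v"
        have hS: "fst h \<in> S" using half_in[OF h] by blast
        then have hE: "fst h \<in> E" using SE by blast
        note fv = FF_vals[OF f hE]
        show "f (fst h) \<in> {1..n}" using fv hS by auto
      qed
      ultimately show ?thesis using Wc_shift n1 True by simp
    next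
      case False
      have "\<forall>h\<in>halves_at S ends v. R f (fst h) = f (fst h)"
      proof
        fix h assume h: "h \<in> halves_at S ends v"
        have "fst h \<in> S" using half_in[OF h] by blast
        moreover have "fst (ends (fst h)) \<notin> U" using notU[OF False h] .
        ultimately show "R f (fst h) = f (fst h)" using SE unfolding R_def by auto
      qed
      then show ?thesis using Wc_same False by simp
    qed
    have "Wt n (xw n) E ends (R f) = (\<Prod>v\<in>{0..<n}. (if v \<in> U then xw n 1 else 1) * Wc (xw n) (halves_at S ends v) f)"
      unfolding Wt_FF[OF RFF[OF f]] fac ..
    also have "\<dots> = (\<Prod>v\<in>{0..<n}. (if v \<in> U then xw n 1 else 1)) * Wt n (xw n) E ends f"
      unfolding Wt_FF[OF f] prod.distrib ..
    also have "(\<Prod>v\<in>{0..<n}. (if v \<in> U then xw n 1 else 1)) = xw n 1 ^ k"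
      unfolding k_def by (simp add: prod.If_cases)
    finally show ?thesis .
  qed
  define s where "s = sum (Wt n (xw n) E ends) (FF n E S)"
  have "s = sum (Wt n (xw n) E ends) (R ` FF n E S)" unfolding s_def Rsurj ..
  also have "\<dots> = sum (Wt n (xw n) E ends \<circ> R) (FF n E S)" using injR by (rule sum.reindex)
  also have "\<dots> = sum (\<lambda>f. xw n 1 ^ k * Wt n (xw n) E ends f) (FF n E S)" using WR by (intro sum.cong) auto
  also have "\<dots> = xw n 1 ^ k * s" unfolding s_def by (simp add: sum_distrib_left)
  finally have "(1 - xw n 1 ^ k) * s = 0" by (simp add: algebra_simps)
  then show ?thesis using xw_pow_ne1[OF k0 kn] unfolding s_def by simp
qed

end


lemma hvert_in_ev: "h \<in> half_edges C \<Longrightarrow> hvert ends h \<in> edge_verts C ends"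
  unfolding half_edges_def hvert_def edge_verts_def by auto

lemma ham_iff:
  fixes E :: "('e::linorder) set"
  assumes n1: "n \<ge> 1" and mg: "multigraph n E ends"
  shows "{S\<in>Pow E. (\<forall>v<n. deg S ends v = 2) \<and> edges_connected S ends} = {C. is_ham_cycle n E ends C}"
proof (intro set_eqI iffI)
  fix S assume "S \<in> {S\<in>Pow E. (\<forall>v<n. deg S ends v = 2) \<and> edges_connected S ends}"
  then have SE: "S \<subseteq> E" and deg2: "\<forall>v<n. deg S ends v = 2" and conn: "edges_connected S ends" by auto
  have finS: "finite S" using finite_subset[OF SE finE[OF n1 mg SE]] .
  have sub: "hvert ends ` half_edges S \<subseteq> {0..<n}"
    using hvert_in_ev ev_lt[OF n1 mg SE] by fastforce
  have "(\<Sum>v\<in>{0..<n}. deg S ends v) = 2 * card S" by (rule handshake[OF finS _ sub]) simp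
  moreover have "(\<Sum>v\<in>{0..<n}. deg S ends v) = (\<Sum>v\<in>{0..<n}. 2)" using deg2 by (intro sum.cong) auto
  ultimately have "card S = n" by simp
  moreover have "is_cycle E ends S" unfolding is_cycle_def using SE deg2 ev_lt[OF n1 mg SE] by blast
  ultimately show "S \<in> {C. is_ham_cycle n E ends C}" unfolding is_ham_cycle_def using conn finS by simp
next
  fix C assume "C \<in> {C. is_ham_cycle n E ends C}"
  then have cyc: "is_cycle E ends C" and conn: "edges_connected C ends" and finC: "finite C" and cC: "card C = n"
    unfolding is_ham_cycle_def by auto
  have CE: "C \<subseteq> E" and d2: "\<forall>v\<in>edge_verts C ends. deg C ends v = 2" using cyc unfolding is_cycle_def by auto
  have finEV: "finite (edge_verts C ends)" unfolding edge_verts_def using finC by simp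
  have sub: "hvert ends ` half_edges C \<subseteq> edge_verts C ends" using hvert_in_ev by blast
  have "(\<Sum>v\<in>edge_verts C ends. deg C ends v) = 2 * card C" by (rule handshake[OF finC finEV sub])
  moreover have "(\<Sum>v\<in>edge_verts C ends. deg C ends v) = (\<Sum>v\<in>edge_verts C ends. 2)" using d2 by (intro sum.cong) auto
  ultimately have cev: "card (edge_verts C ends) = n" using cC by simp
  have evsub: "edge_verts C ends \<subseteq> {0..<n}" using ev_lt[OF n1 mg CE] by auto
  have "edge_verts C ends = {0..<n}" using card_subset_eq[OF finite_atLeastLessThan evsub] cev by simp
  then have "\<forall>v<n. deg C ends v = 2" using d2 by auto
  then show "C \<in> {S\<in>Pow E. (\<forall>v<n. deg S ends v = 2) \<and> edges_connected S ends}" using CE conn by auto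
qed

theorem corollary3:
  fixes n :: nat and E :: "('e::linorder) set" and ends :: "'e \<Rightarrow> nat \<times> nat"
  assumes "n \<ge> 1"
    and "multigraph n E ends"
    and "\<forall>v<n. deg E ends v \<ge> 1"
  shows "of_nat (card {C. is_ham_cycle n E ends C}) =
         partition_fn (n + 1)
           (A_fam n (\<lambda>j. exp (2 * pi * \<i> * of_nat j / of_nat n)) 0)
           Id_mat n E ends / of_nat n"
proof -
  note n1 = assms(1) and mg = assms(2) and d1 = assms(3)
  have fin: "finite E" using mg unfolding multigraph_def by simp
  have xe: "(\<lambda>j. exp (2 * pi * \<i> * of_nat j / of_nat n)) = xw n" unfolding xw_def by (rule refl)
  define good where "good S = ((\<forall>v<n. deg S ends v = 2) \<and> edges_connected S ends)" for S
  have cases: "(\<Sum>f\<in>FF n E S. Wt n (xw n) E ends f) = (if good S then of_nat n else 0)" if SE: "S \<in> Pow E" for S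
  proof -
    have SE': "S \<subseteq> E" using SE by simp
    show ?thesis
    proof (cases "\<forall>v<n. deg S ends v = 2")
      case False
      then show ?thesis using caseA[OF n1 mg SE'] unfolding good_def by auto
    next
      case True
      show ?thesis
      proof (cases "edges_connected S ends")
        case c: True
        then show ?thesis using caseB[OF n1 mg SE' True c] unfolding good_def using True by simp
      next
        case c: False
        then show ?thesis using caseC[OF n1 mg SE' True c] unfolding good_def by simp
      qed
    qed
  qed
  have "partition_fn (n + 1) (A_fam n (\<lambda>j. exp (2 * pi * \<i> * of_nat j / of_nat n)) 0) Id_mat n E ends
      = (\<Sum>S\<in>Pow E. \<Sum>f\<in>FF n E S. Wt n (xw n) E ends f)"
    unfolding xe by (rule pf_Wt[OF fin d1])
  also have "\<dots> = (\<Sum>S\<in>Pow E. (if good S then of_nat n else 0))" using cases by (rule sum.cong[OF refl])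
  also have "\<dots> = (\<Sum>S\<in>{S\<in>Pow E. good S}. of_nat n)" by (rule sum.inter_filter[symmetric]) (simp add: fin)
  also have "\<dots> = of_nat (card {S\<in>Pow E. good S}) * of_nat n" by simp
  also have "{S\<in>Pow E. good S} = {C. is_ham_cycle n E ends C}" unfolding good_def by (rule ham_iff[OF n1 mg])
  finally have "partition_fn (n + 1) (A_fam n (\<lambda>j. exp (2 * pi * \<i> * of_nat j / of_nat n)) 0) Id_mat n E ends
      = of_nat (card {C. is_ham_cycle n E ends C}) * of_nat n" .
  then show ?thesis using n1 by simp
qed

end
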